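(* For any $n\in\mathbb{N}$ and $A>0$, there exists $f\in C^1[-1,1]$ with $f\le0$ on $[-1,0]$ and $f\ge0$ on $[0,1]$, such that every algebraic polynomial $P_n$ of degree $\le n$ which satisfies $P_n\ge0$ on $(0,1/n)$ and $P_n^{(i)}(0)=f^{(i)}(0)$ for $i=0,1$ obeys $$\|f-P_n\|>A\,\omega_3(f',1).$$
   Context: $\|\cdot\|$ is the sup norm on $[-1,1]$; $\omega_3(g,t)$ is the third modulus of smoothness of $g$ on $[-1,1]$. *)

theory Defs
  imports "HOL-Analysis.Analysis" "HOL-Computational_Algebra.Polynomial"
begin

definition sup_norm :: "(real \<Rightarrow> real) \<Rightarrow> real" where
  "sup_norm g = (SUP x\<in>{-1..1}. \<bar>g x\<bar>)"

definition diff3 :: "(real \<Rightarrow> real) \<Rightarrow> real \<Rightarrow> real \<Rightarrow> real" where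
  "diff3 g h x = g (x + 3*h) - 3 * g (x + 2*h) + 3 * g (x + h) - g x"

definition omega3 :: "(real \<Rightarrow> real) \<Rightarrow> real \<Rightarrow> real" where
  "omega3 g t = Sup {\<bar>diff3 g h x\<bar> | x h. 0 < h \<and> h \<le> t \<and> -1 \<le> x \<and> x + 3*h \<le> 1}"

definition C1_with :: "(real \<Rightarrow> real) \<Rightarrow> (real \<Rightarrow> real) \<Rightarrow> bool" where
  "C1_with f f' \<longleftrightarrow> (\<forall>x\<in>{-1..1}. (f has_real_derivative f' x) (at x within {-1..1}))
                      \<and> continuous_on {-1..1} f'"

end

theory Submission imports Defs begin
lemma DERIV_split:
  fixes f g f' g' :: "real \<Rightarrow> real"
  assumes f: "\<And>x. (f has_real_derivative f' x) (at x)"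
    and g: "\<And>x. (g has_real_derivative g' x) (at x)"
    and c1: "f c = g c" and c2: "f' c = g' c"
  shows "((\<lambda>x. if x \<le> c then f x else g x) has_real_derivative (if x \<le> c then f' x else g' x)) (at x)"
proof -
  have "((\<lambda>x. if x \<in> {..c} then f x else g x) has_derivative
      (if x \<in> {..c} then (\<lambda>h. h * f' x) else (\<lambda>h. h * g' x))) (at x within ({..c} \<union> {c<..}))"
  proof (rule has_derivative_If_within_closures)
    fix y show "(f has_derivative (\<lambda>h. h * f' y)) (at y within {..c} \<union> (closure {..c} \<inter> closure {c<..}))"
      using has_derivative_at_withinI[OF f[of y, unfolded has_field_derivative_def]]
      by (simp add: mult.commute[of _ "f' y"])
  next
    fix y show "(g has_derivative (\<lambda>h. h * g' y)) (at y within {c<..} \<union> (closure {..c} \<inter> closure {c<..}))"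
      using has_derivative_at_withinI[OF g[of y, unfolded has_field_derivative_def]]
      by (simp add: mult.commute[of _ "g' y"])
  next
    fix y assume "y \<in> closure {..c}" "y \<in> closure {c<..}"
    then have "y = c" by auto
    then show "f y = g y" "(\<lambda>h. h * f' y) = (\<lambda>h. h * g' y)" using c1 c2 by auto
  qed auto
  moreover have "{..c} \<union> {c<..} = (UNIV::real set)" by auto
  moreover have e: "\<And>a::real. (\<lambda>h. h * a) = (*) a" by (auto simp: fun_eq_iff)
  ultimately show ?thesis
    by (auto simp: has_field_derivative_def e split: if_splits)
qed

lemma cont_split:
  fixes f g :: "real \<Rightarrow> real"
  assumes "continuous_on UNIV f" "continuous_on UNIV g" "f c = g c"
  shows "continuous_on UNIV (\<lambda>x. if x \<le> c then f x else g x)"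
proof -
  have "continuous_on ({..c} \<union> {c..}) (\<lambda>x. if x \<le> c then f x else g x)"
    by (rule continuous_on_If) (use assms in \<open>auto intro: continuous_on_subset\<close>)
  moreover have "{..c} \<union> {c..} = (UNIV::real set)" by auto
  ultimately show ?thesis by simp
qed

lemma interp_coeff_bound:
  fixes X :: "real set" and N :: nat
  assumes fin: "finite X" and cardX: "card X = Suc N"
  shows "\<exists>K\<ge>0. \<forall>(e::real poly) \<epsilon>. degree e \<le> N \<longrightarrow> (\<forall>x\<in>X. \<bar>poly e x\<bar> \<le> \<epsilon>) \<longrightarrow> (\<forall>k. \<bar>coeff e k\<bar> \<le> K * \<epsilon>)"
proof -
  define L where "L x = smult (1 / (\<Prod>y\<in>X-{x}. x - y)) (\<Prod>y\<in>X-{x}. [:-y,1:])" for x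
  have degL: "degree (L x) \<le> N" if "x \<in> X" for x
  proof -
    have "degree (L x) \<le> degree (\<Prod>y\<in>X-{x}. [:-y,1:])" unfolding L_def by (rule degree_smult_le)
    also have "\<dots> \<le> sum (degree \<circ> (\<lambda>y. [:-y,1:])) (X-{x})" by (rule degree_prod_sum_le) (use fin in auto)
    also have "\<dots> = card (X - {x})" by simp
    also have "\<dots> = N" using cardX fin that by simp
    finally show ?thesis .
  qed
  have polyL: "poly (L x) z = (if z = x then 1 else 0)" if "x \<in> X" "z \<in> X" for x z
  proof (cases "z = x")
    case True
    have "(\<Prod>y\<in>X-{x}. x - y) \<noteq> 0" using fin by (subst prod_zero_iff) auto
    then show ?thesis using True by (simp add: L_def poly_prod)
  next
    case False
    have "(\<Prod>y\<in>X-{x}. z - y) = 0" using fin that False by (subst prod_zero_iff) auto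
    then show ?thesis using False by (simp add: L_def poly_prod)
  qed
  define K where "K = (\<Sum>k\<le>N. \<Sum>x\<in>X. \<bar>coeff (L x) k\<bar>)"
  have K0: "K \<ge> 0" unfolding K_def by (intro sum_nonneg) auto
  show ?thesis
  proof (intro exI[of _ K] conjI K0 allI impI)
    fix e :: "real poly" and \<epsilon> k
    assume de: "degree e \<le> N" and be: "\<forall>x\<in>X. \<bar>poly e x\<bar> \<le> \<epsilon>"
    have "X \<noteq> {}" using cardX by auto
    then obtain x0 where "x0 \<in> X" by auto
    with be have eps0: "\<epsilon> \<ge> 0" by force
    define Q where "Q = (\<Sum>x\<in>X. smult (poly e x) (L x))"
    have dQ: "degree Q \<le> N" unfolding Q_def
      by (rule degree_sum_le) (use fin degL in \<open>auto intro: order.trans[OF degree_smult_le]\<close>)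
    have pQ: "poly Q z = poly e z" if "z \<in> X" for z
    proof -
      have "poly Q z = (\<Sum>x\<in>X. poly e x * poly (L x) z)" by (simp add: Q_def poly_sum)
      also have "\<dots> = (\<Sum>x\<in>X. if x = z then poly e z else 0)"
        by (rule sum.cong) (use that polyL in auto)
      also have "\<dots> = poly e z" using fin that by simp
      finally show ?thesis .
    qed
    have eQ: "e = Q"
      by (rule poly_eqI_degree[of X]) (use pQ cardX de dQ in auto)
    show "\<bar>coeff e k\<bar> \<le> K * \<epsilon>"
    proof (cases "k \<le> N")
      case False
      then have "coeff e k = 0" using de by (intro coeff_eq_0) auto
      then show ?thesis using K0 eps0 by simp
    next
      case True
      have "\<bar>coeff e k\<bar> = \<bar>\<Sum>x\<in>X. poly e x * coeff (L x) k\<bar>"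
        by (subst eQ) (simp add: Q_def coeff_sum)
      also have "\<dots> \<le> (\<Sum>x\<in>X. \<bar>poly e x * coeff (L x) k\<bar>)" by (rule sum_abs)
      also have "\<dots> \<le> (\<Sum>x\<in>X. \<epsilon> * \<bar>coeff (L x) k\<bar>)"
        by (rule sum_mono) (use be in \<open>auto simp: abs_mult intro: mult_right_mono\<close>)
      also have "\<dots> = \<epsilon> * (\<Sum>x\<in>X. \<bar>coeff (L x) k\<bar>)" by (simp add: sum_distrib_left)
      also have "\<dots> \<le> \<epsilon> * K" unfolding K_def
        by (rule mult_left_mono[OF _ eps0], rule member_le_sum[where f = "\<lambda>k. \<Sum>x\<in>X. \<bar>coeff (L x) k\<bar>"])
           (use True in \<open>auto intro: sum_nonneg\<close>)
      finally show ?thesis by (simp add: mult.commute)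
    qed
  qed
qed

lemma poly_small_bound:
  fixes e :: "real poly" and N :: nat and K \<epsilon> x :: real
  assumes "degree e \<le> N" "coeff e 0 = 0" "coeff e 1 = 0" "\<forall>k. \<bar>coeff e k\<bar> \<le> K * \<epsilon>" "\<bar>x\<bar> \<le> 1"
  shows "\<bar>poly e x\<bar> \<le> (real N + 1) * (K * \<epsilon>) * x^2"
proof -
  have "poly e x = (\<Sum>i\<le>N. coeff e i * x ^ i)"
    using assms(1) by (simp add: poly_altdef sum.mono_neutral_right[of "{..N}" "{..degree e}"] coeff_eq_0)
  then have "\<bar>poly e x\<bar> \<le> (\<Sum>i\<le>N. \<bar>coeff e i * x ^ i\<bar>)" by (simp add: sum_abs)
  also have "\<dots> \<le> (\<Sum>i\<le>N. (K * \<epsilon>) * x^2)"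
  proof (rule sum_mono)
    fix i assume "i \<in> {..N}"
    show "\<bar>coeff e i * x ^ i\<bar> \<le> K * \<epsilon> * x\<^sup>2"
    proof (cases "i \<le> 1")
      case True
      then have "i = 0 \<or> i = 1" by auto
      then have "coeff e i = 0" using assms by auto
      moreover have "K * \<epsilon> \<ge> 0" using assms(4) by (metis abs_ge_zero order.trans)
      ultimately show ?thesis by simp
    next
      case False
      have ii: "i = 2 + (i-2)" using False by simp
      have "\<bar>x\<bar> ^ i = \<bar>x\<bar>^2 * \<bar>x\<bar>^(i-2)" by (subst ii) (simp only: power_add)
      also have "\<dots> \<le> \<bar>x\<bar>^2" using assms(5) by (simp add: mult_left_le power_le_one)
      finally have xi: "\<bar>x\<bar> ^ i \<le> x^2" by simp
      have "\<bar>coeff e i * x ^ i\<bar> = \<bar>coeff e i\<bar> * \<bar>x\<bar>^i" by (simp add: abs_mult power_abs)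
      also have "\<dots> \<le> (K * \<epsilon>) * x^2"
        by (rule mult_mono) (use assms(4) xi in auto)
      finally show ?thesis .
    qed
  qed
  also have "\<dots> = (real N + 1) * (K * \<epsilon>) * x^2" by simp
  finally show ?thesis .
qed

theorem lemma3p10:
  fixes n :: nat and A :: real
  assumes "n \<ge> 1" and "A > 0"
  shows "\<exists>f f'. C1_with f f'
           \<and> (\<forall>x\<in>{-1..0}. f x \<le> 0) \<and> (\<forall>x\<in>{0..1}. f x \<ge> 0)
           \<and> (\<forall>P :: real poly. degree P \<le> n
                 \<and> (\<forall>x\<in>{0<..<1 / real n}. poly P x \<ge> 0)
                 \<and> poly P 0 = f 0 \<and> poly (pderiv P) 0 = f' 0
                 \<longrightarrow> sup_norm (\<lambda>x. f x - poly P x) > A * omega3 f' 1)"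
proof -
  define N where "N = n + 3"
  have "infinite {0..1::real}" by simp
  then obtain X :: "real set" where X: "X \<subseteq> {0..1}" "finite X" "card X = Suc N"
    using infinite_arbitrarily_large by blast
  obtain K where K0: "K \<ge> 0" and K: "\<And>(e::real poly) \<epsilon>. degree e \<le> N \<Longrightarrow> (\<forall>x\<in>X. \<bar>poly e x\<bar> \<le> \<epsilon>) \<Longrightarrow> (\<forall>k. \<bar>coeff e k\<bar> \<le> K * \<epsilon>)"
    using interp_coeff_bound[OF X(2,3)] by blast
  define C where "C = (real N + 1) * K"
  have C0: "C \<ge> 0" using K0 by (simp add: C_def)
  define D where "D = 4 * C * (8 * A + 1) + 2 * real n + 2"
  define \<delta> where "\<delta> = 1 / D"
  have CA: "C * (8 * A + 1) \<ge> 0" using C0 assms by simp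
  have D2: "D \<ge> 2" using CA by (simp add: D_def)
  have d0: "\<delta> > 0" using D2 by (simp add: \<delta>_def)
  have d1: "\<delta> \<le> 1/2" unfolding \<delta>_def using D2 by (intro divide_left_mono) auto
  have nD: "real n < 2 * D" using CA by (simp add: D_def)
  have dn: "\<delta> / 2 < 1 / real n"
  proof -
    have "\<delta> / 2 = 1 / (2 * D)" by (simp add: \<delta>_def)
    also have "\<dots> < 1 / real n" by (rule frac_less2) (use nD assms(1) in auto)
    finally show ?thesis .
  qed
  have CD: "2 * C * (8 * A + 1) < D" using CA by (simp add: D_def)
  have dC: "2 * C * (8 * A + 1) * \<delta> < 1"
    using CD D2 by (simp add: \<delta>_def pos_divide_less_eq)
  define q where "q x = x^2 * (x - \<delta>)" for x :: real
  define r where "r x = (x - \<delta>)^2 * (x + \<delta>)" for x :: real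
  define f where "f x = (if x \<le> 0 then q x else (if x \<le> \<delta> then 0 else r x))" for x
  define f' where "f' x = (if x \<le> 0 then 3*x^2 - 2*\<delta>*x else (if x \<le> \<delta> then 0 else 3*x^2 - 2*\<delta>*x - \<delta>^2))" for x :: real
  have Dq: "(q has_real_derivative 3*x^2 - 2*\<delta>*x) (at x)" for x
    unfolding q_def by (auto intro!: derivative_eq_intros) (simp add: algebra_simps power2_eq_square)
  have Dr: "(r has_real_derivative 3*x^2 - 2*\<delta>*x - \<delta>^2) (at x)" for x
    unfolding r_def by (auto intro!: derivative_eq_intros) (simp add: algebra_simps power2_eq_square)
  have Dinner: "((\<lambda>x. if x \<le> \<delta> then 0 else r x) has_real_derivative
      (if x \<le> \<delta> then 0 else 3*x^2 - 2*\<delta>*x - \<delta>^2)) (at x)" for x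
    by (rule DERIV_split[where f = "\<lambda>_. 0" and f' = "\<lambda>_. 0", OF _ Dr]) (auto simp: r_def power2_eq_square)
  have Df: "(f has_real_derivative f' x) (at x)" for x
    unfolding f_def f'_def
    by (rule DERIV_split[OF Dq Dinner]) (use d0 in \<open>auto simp: q_def\<close>)
  have cf': "continuous_on UNIV f'"
    unfolding f'_def
    by (intro cont_split continuous_intros) (use d0 in \<open>auto simp: power2_eq_square\<close>)
  have C1: "C1_with f f'"
    unfolding C1_with_def
    using Df cf' by (auto intro: has_field_derivative_at_within continuous_on_subset)
  have contf: "continuous_on UNIV f"
    using Df by (intro continuous_at_imp_continuous_on) (auto intro: DERIV_isCont)
  have neg: "\<forall>x\<in>{-1..0}. f x \<le> 0"
    using d0 by (auto simp: f_def q_def intro: mult_nonneg_nonpos)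
  have pos: "\<forall>x\<in>{0..1}. f x \<ge> 0"
    using d0 by (auto simp: f_def q_def r_def)
  define p where "p x = 3*x^2 - 2*\<delta>*x" for x :: real
  define g where "g x = f' x - p x" for x
  have gb: "\<bar>g x\<bar> \<le> \<delta>^2" for x
  proof -
    consider "x \<le> 0" | "0 < x" "x \<le> \<delta>" | "\<delta> < x" by linarith
    then show ?thesis
    proof cases
      case 2
      have a: "x*x \<le> \<delta>*x" using 2 by (intro mult_right_mono) auto
      have b: "\<delta>*x \<le> \<delta>*\<delta>" using 2 d0 by (intro mult_left_mono) auto
      have "3*x^2 - 2*\<delta>*x \<le> \<delta>^2" using a b by (simp add: power2_eq_square)
      moreover have "3*x^2 - 2*\<delta>*x \<ge> - (\<delta>^2)"
      proof -
        have "0 \<le> (3*x-\<delta>)^2" by simp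
        then have "0 \<le> 9*(x*x) - 6*\<delta>*x + \<delta>*\<delta>" by (simp add: power2_eq_square algebra_simps)
        moreover have "0 \<le> \<delta>*\<delta>" by simp
        ultimately show ?thesis unfolding power2_eq_square by linarith
      qed
      ultimately show ?thesis using 2 by (simp add: g_def f'_def p_def)
    qed (auto simp: g_def f'_def p_def)
  qed
  have dp: "diff3 p h x = 0" for h x
    by (simp add: diff3_def p_def power2_eq_square algebra_simps)
  have om: "omega3 f' 1 \<le> 8 * \<delta>^2"
    unfolding omega3_def
  proof (rule cSup_least)
    show "{\<bar>diff3 f' h x\<bar> |x h. 0 < h \<and> h \<le> 1 \<and> - 1 \<le> x \<and> x + 3 * h \<le> 1} \<noteq> {}"
      (is "?Y \<noteq> {}")
    proof -
      have "\<bar>diff3 f' (1/3) (-1)\<bar> \<in> ?Y" by (intro CollectI exI[of _ "-1"] exI[of _ "1/3"]) auto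
      then show ?thesis by blast
    qed
  next
    fix y assume "y \<in> {\<bar>diff3 f' h x\<bar> |x h. 0 < h \<and> h \<le> 1 \<and> - 1 \<le> x \<and> x + 3 * h \<le> 1}"
    then obtain x h where y: "y = \<bar>diff3 f' h x\<bar>" by blast
    have "diff3 f' h x = diff3 p h x + diff3 g h x"
      by (simp add: diff3_def g_def algebra_simps)
    also have "\<dots> = g (x + 3*h) - 3 * g (x + 2*h) + 3 * g (x + h) - g x" by (simp add: dp, simp add: diff3_def)
    finally have "\<bar>diff3 f' h x\<bar> \<le> \<bar>g (x + 3*h)\<bar> + 3 * \<bar>g (x + 2*h)\<bar> + 3 * \<bar>g (x + h)\<bar> + \<bar>g x\<bar>"
      by simp
    also have "\<dots> \<le> 8 * \<delta>^2" using gb[of "x+3*h"] gb[of "x+2*h"] gb[of "x+h"] gb[of x] by simp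
    finally show "y \<le> 8 * \<delta>^2" using y by simp
  qed
  have fq: "\<bar>f x - q x\<bar> \<le> \<delta>^2" if "x \<in> {0..1}" for x
  proof -
    consider "x \<le> 0" | "0 < x" "x \<le> \<delta>" | "\<delta> < x" by linarith
    then show ?thesis
    proof cases
      case 1 then show ?thesis by (simp add: f_def)
    next
      case 2
      have "x^2 \<le> \<delta>^2" using 2 by (simp add: power_mono)
      moreover have "\<delta> - x \<le> 1" using 2 d1 by simp
      ultimately have "x^2 * (\<delta> - x) \<le> \<delta>^2 * 1"
        using 2 by (intro mult_mono) auto
      then show ?thesis using 2 by (simp add: f_def q_def abs_if algebra_simps)
    next
      case 3
      have "r x - q x = - (\<delta>^2 * (x - \<delta>))" by (simp add: r_def q_def power2_eq_square algebra_simps)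
      moreover have "\<delta>^2 * (x - \<delta>) \<le> \<delta>^2 * 1" using 3 that d0 by (intro mult_left_mono) auto
      ultimately show ?thesis using 3 d0 by (simp add: f_def abs_if)
    qed
  qed
  have main: "sup_norm (\<lambda>x. f x - poly P x) > A * omega3 f' 1"
    if P: "degree P \<le> n" "\<forall>x\<in>{0<..<1 / real n}. poly P x \<ge> 0" "poly P 0 = f 0" "poly (pderiv P) 0 = f' 0" for P
  proof (rule ccontr)
    define S where "S = sup_norm (\<lambda>x. f x - poly P x)"
    assume "\<not> ?thesis"
    then have "S \<le> A * omega3 f' 1" by (simp add: S_def)
    also have "\<dots> \<le> A * (8 * \<delta>^2)" using om assms(2) by (intro mult_left_mono) auto
    finally have S8: "S \<le> 8 * A * \<delta>^2" by simp
    have contd: "continuous_on {-1..1} (\<lambda>x. \<bar>f x - poly P x\<bar>)"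
      by (intro continuous_intros continuous_on_subset[OF contf]) auto
    have bdd: "bdd_above ((\<lambda>x. \<bar>f x - poly P x\<bar>) ` {-1..1})"
      by (intro bounded_imp_bdd_above compact_imp_bounded compact_continuous_image contd) auto
    have Sx: "\<bar>f x - poly P x\<bar> \<le> S" if "x \<in> {-1..1}" for x
      unfolding S_def sup_norm_def by (rule cSUP_upper[OF that bdd])
    define Q where "Q = [:0, 0, -\<delta>, 1:]"
    have pQ: "poly Q x = q x" for x by (simp add: Q_def q_def power2_eq_square algebra_simps)
    define e where "e = P - Q"
    have dQ: "degree Q \<le> 3" by (simp add: Q_def)
    have de: "degree e \<le> N" unfolding e_def N_def
      using degree_diff_le_max[of P Q] P(1) dQ by linarith
    have f0: "f 0 = 0" by (simp add: f_def q_def)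
    have f'0: "f' 0 = 0" by (simp add: f'_def)
    have e0: "coeff e 0 = 0" using P(3) f0 by (simp add: e_def Q_def poly_0_coeff_0)
    have e1: "coeff e 1 = 0"
    proof -
      have "coeff (pderiv P) 0 = coeff P 1" by (simp add: coeff_pderiv)
      then show ?thesis using P(4) f'0 by (simp add: e_def Q_def poly_0_coeff_0)
    qed
    define \<epsilon> where "\<epsilon> = (8 * A + 1) * \<delta>^2"
    have eX: "\<forall>x\<in>X. \<bar>poly e x\<bar> \<le> \<epsilon>"
    proof
      fix x assume "x \<in> X"
      then have x: "x \<in> {0..1}" using X(1) by auto
      have "\<bar>poly e x\<bar> = \<bar>(poly P x - f x) + (f x - q x)\<bar>" by (simp add: e_def pQ)
      also have "\<dots> \<le> \<bar>f x - poly P x\<bar> + \<bar>f x - q x\<bar>" by linarith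
      also have "\<dots> \<le> S + \<delta>^2" using Sx[of x] fq[OF x] x by (intro add_mono) auto
      also have "\<dots> \<le> \<epsilon>" using S8 by (simp add: \<epsilon>_def algebra_simps)
      finally show "\<bar>poly e x\<bar> \<le> \<epsilon>" .
    qed
    have ck: "\<forall>k. \<bar>coeff e k\<bar> \<le> K * \<epsilon>" by (rule K[OF de eX])
    define x0 where "x0 = \<delta> / 2"
    have x0a: "\<bar>x0\<bar> \<le> 1" using d0 d1 by (simp add: x0_def)
    have "\<bar>poly e x0\<bar> \<le> (real N + 1) * (K * \<epsilon>) * x0^2"
      by (rule poly_small_bound[OF de e0 e1 ck x0a])
    also have "\<dots> = C * (8 * A + 1) * \<delta>^4 / 4" by (simp add: C_def \<epsilon>_def x0_def power2_eq_square power4_eq_xxxx)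
    finally have up: "poly e x0 \<le> C * (8 * A + 1) * \<delta>^4 / 4" by simp
    have "poly P x0 \<ge> 0" using P(2) d0 dn by (auto simp: x0_def)
    then have low: "poly e x0 \<ge> \<delta>^3 / 8"
      by (simp add: e_def pQ q_def x0_def power2_eq_square power3_eq_cube field_simps)
    have "\<delta>^3 / 8 \<le> C * (8 * A + 1) * \<delta>^4 / 4" using up low by linarith
    then have "\<delta>^3 * 1 \<le> \<delta>^3 * (2 * C * (8 * A + 1) * \<delta>)"
      by (simp add: power4_eq_xxxx power3_eq_cube field_simps)
    then have "1 \<le> 2 * C * (8 * A + 1) * \<delta>" using d0 by (simp add: mult_le_cancel_left)
    then show False using dC by linarith
  qed
  show ?thesis
    by (rule exI[of _ f], rule exI[of _ f']) (use C1 neg pos main in blast)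
qed

end
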